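(* Let $R$ be a commutative semiring and $v:R\to M$ a surjective m-valuation. (i) If $\varphi$ is any supervaluation covering $v$, then $\varphi(a)$ is ghost for every $a\in Y(v)$. (ii) If $Y(v)=\emptyset$, then every surjective m-supervaluation covering $v$ is a supervaluation.
   Context: A bipotent semiring $M$: commutative monoid with absorbing $0$, total order compatible with multiplication, $0$ least, $x+y=\max(x,y)$. An m-valuation: multiplicative $v:R\to M$ with $v(0)=0$, $v(1)=1$, $v(a+b)\le\max(v(a),v(b))$. A supertropical monoid is a commutative monoid $U$ with absorbing $0$, idempotent $e$ with $ex=0\Rightarrow x=0$, and a total order on $eU$ making it a bipotent semiring; elements of $eU$ are ghost. It is a semiring if the addition $x+y:=y$ ($ex<ey$), $x$ ($ex>ey$), $ex$ ($ex=ey$) is associative and distributive. An m-supervaluation is a map $\varphi:R\to U$ with $\varphi(0)=0$, $\varphi(1)=1$, multiplicative, $e\varphi(a+b)\le\max(e\varphi(a),e\varphi(b))$; it covers $v$ if $eU=M$ and $e\varphi=v$; it is surjective if $U=\varphi(R)\cup e\varphi(R)$; it is a supervaluation if $U$ is a semiring. $Y(v):=\{ab: a,b\in R,\ \exists a'\in R\text{ with } v(a')<v(a),\ v(a'b)=v(ab)\neq0\}$. *)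

theory Defs
  imports Main
begin

definition comm_monoid_abs :: "'a set \<Rightarrow> ('a \<Rightarrow> 'a \<Rightarrow> 'a) \<Rightarrow> 'a \<Rightarrow> 'a \<Rightarrow> bool" where
  "comm_monoid_abs M f u z \<longleftrightarrow>
     u \<in> M \<and> z \<in> M \<and> (\<forall>x\<in>M. \<forall>y\<in>M. f x y \<in> M) \<and>
     (\<forall>x\<in>M. \<forall>y\<in>M. \<forall>w\<in>M. f (f x y) w = f x (f y w)) \<and>
     (\<forall>x\<in>M. \<forall>y\<in>M. f x y = f y x) \<and>
     (\<forall>x\<in>M. f u x = x) \<and> (\<forall>x\<in>M. f z x = z)"

text \<open>Bipotent semiring: commutative monoid with absorbing 0, total order compatible with
  multiplication, 0 least; addition is max (determined by the order).\<close>

definition bipotent_semiring ::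
  "'a set \<Rightarrow> ('a \<Rightarrow> 'a \<Rightarrow> 'a) \<Rightarrow> 'a \<Rightarrow> 'a \<Rightarrow> ('a \<Rightarrow> 'a \<Rightarrow> bool) \<Rightarrow> bool" where
  "bipotent_semiring M f u z le \<longleftrightarrow>
     comm_monoid_abs M f u z \<and>
     (\<forall>x\<in>M. le x x) \<and>
     (\<forall>x\<in>M. \<forall>y\<in>M. le x y \<and> le y x \<longrightarrow> x = y) \<and>
     (\<forall>x\<in>M. \<forall>y\<in>M. \<forall>w\<in>M. le x y \<and> le y w \<longrightarrow> le x w) \<and>
     (\<forall>x\<in>M. \<forall>y\<in>M. le x y \<or> le y x) \<and>
     (\<forall>x\<in>M. \<forall>y\<in>M. \<forall>w\<in>M. le x y \<longrightarrow> le (f x w) (f y w)) \<and>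
     (\<forall>x\<in>M. le z x)"

definition ord_max :: "('a \<Rightarrow> 'a \<Rightarrow> bool) \<Rightarrow> 'a \<Rightarrow> 'a \<Rightarrow> 'a" where
  "ord_max le x y = (if le x y then y else x)"

definition ord_less :: "('a \<Rightarrow> 'a \<Rightarrow> bool) \<Rightarrow> 'a \<Rightarrow> 'a \<Rightarrow> bool" where
  "ord_less le x y \<longleftrightarrow> le x y \<and> x \<noteq> y"

definition supertropical_monoid ::
  "'u set \<Rightarrow> ('u \<Rightarrow> 'u \<Rightarrow> 'u) \<Rightarrow> 'u \<Rightarrow> 'u \<Rightarrow> 'u \<Rightarrow> ('u \<Rightarrow> 'u \<Rightarrow> bool) \<Rightarrow> bool" where
  "supertropical_monoid U f u z e le \<longleftrightarrow>
     comm_monoid_abs U f u z \<and> e \<in> U \<and> f e e = e \<and>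
     (\<forall>x\<in>U. f e x = z \<longrightarrow> x = z) \<and>
     bipotent_semiring (f e ` U) f e z le"

definition st_add :: "('u \<Rightarrow> 'u \<Rightarrow> 'u) \<Rightarrow> 'u \<Rightarrow> ('u \<Rightarrow> 'u \<Rightarrow> bool) \<Rightarrow> 'u \<Rightarrow> 'u \<Rightarrow> 'u" where
  "st_add f e le x y =
     (if ord_less le (f e x) (f e y) then y
      else if ord_less le (f e y) (f e x) then x
      else f e x)"

definition supertropical_semiring ::
  "'u set \<Rightarrow> ('u \<Rightarrow> 'u \<Rightarrow> 'u) \<Rightarrow> 'u \<Rightarrow> 'u \<Rightarrow> 'u \<Rightarrow> ('u \<Rightarrow> 'u \<Rightarrow> bool) \<Rightarrow> bool" where
  "supertropical_semiring U f u z e le \<longleftrightarrow>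
     supertropical_monoid U f u z e le \<and>
     (\<forall>x\<in>U. \<forall>y\<in>U. \<forall>w\<in>U.
        st_add f e le (st_add f e le x y) w = st_add f e le x (st_add f e le y w)) \<and>
     (\<forall>x\<in>U. \<forall>y\<in>U. \<forall>w\<in>U.
        f w (st_add f e le x y) = st_add f e le (f w x) (f w y))"

definition m_valuation ::
  "('r::comm_semiring_1 \<Rightarrow> 'a) \<Rightarrow> 'a set \<Rightarrow> ('a \<Rightarrow> 'a \<Rightarrow> 'a) \<Rightarrow> 'a \<Rightarrow> 'a \<Rightarrow> ('a \<Rightarrow> 'a \<Rightarrow> bool) \<Rightarrow> bool" where
  "m_valuation v M f u z le \<longleftrightarrow>
     (\<forall>a. v a \<in> M) \<and> v 0 = z \<and> v 1 = u \<and>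
     (\<forall>a b. v (a * b) = f (v a) (v b)) \<and>
     (\<forall>a b. le (v (a + b)) (ord_max le (v a) (v b)))"

definition m_supervaluation ::
  "('r::comm_semiring_1 \<Rightarrow> 'u) \<Rightarrow> 'u set \<Rightarrow> ('u \<Rightarrow> 'u \<Rightarrow> 'u) \<Rightarrow> 'u \<Rightarrow> 'u \<Rightarrow> 'u \<Rightarrow> ('u \<Rightarrow> 'u \<Rightarrow> bool) \<Rightarrow> bool" where
  "m_supervaluation \<phi> U f u z e le \<longleftrightarrow>
     (\<forall>a. \<phi> a \<in> U) \<and> \<phi> 0 = z \<and> \<phi> 1 = u \<and>
     (\<forall>a b. \<phi> (a * b) = f (\<phi> a) (\<phi> b)) \<and>
     (\<forall>a b. le (f e (\<phi> (a + b))) (ord_max le (f e (\<phi> a)) (f e (\<phi> b))))"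

definition supervaluation ::
  "('r::comm_semiring_1 \<Rightarrow> 'u) \<Rightarrow> 'u set \<Rightarrow> ('u \<Rightarrow> 'u \<Rightarrow> 'u) \<Rightarrow> 'u \<Rightarrow> 'u \<Rightarrow> 'u \<Rightarrow> ('u \<Rightarrow> 'u \<Rightarrow> bool) \<Rightarrow> bool" where
  "supervaluation \<phi> U f u z e le \<longleftrightarrow>
     m_supervaluation \<phi> U f u z e le \<and> supertropical_semiring U f u z e le"

text \<open>Covering: the ghost ideal eU is M (built in: v takes values in eU) and e\<phi> = v.\<close>

definition covers :: "('r \<Rightarrow> 'u) \<Rightarrow> ('r \<Rightarrow> 'u) \<Rightarrow> ('u \<Rightarrow> 'u \<Rightarrow> 'u) \<Rightarrow> 'u \<Rightarrow> bool" where
  "covers \<phi> v f e \<longleftrightarrow> (\<forall>a. f e (\<phi> a) = v a)"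

definition sv_surjective :: "('r \<Rightarrow> 'u) \<Rightarrow> 'u set \<Rightarrow> ('u \<Rightarrow> 'u \<Rightarrow> 'u) \<Rightarrow> 'u \<Rightarrow> bool" where
  "sv_surjective \<phi> U f e \<longleftrightarrow> U = range \<phi> \<union> (\<lambda>a. f e (\<phi> a)) ` UNIV"

definition Yset :: "('r::comm_semiring_1 \<Rightarrow> 'a) \<Rightarrow> 'a \<Rightarrow> ('a \<Rightarrow> 'a \<Rightarrow> bool) \<Rightarrow> 'r set" where
  "Yset v z le = {a * b | a b. \<exists>a'. ord_less le (v a') (v a) \<and> v (a' * b) = v (a * b) \<and> v (a * b) \<noteq> z}"

end

theory Submission
  imports Defs
begin

lemma bip_antisym: "bipotent_semiring G f u z le \<Longrightarrow> x \<in> G \<Longrightarrow> y \<in> G \<Longrightarrow> le x y \<Longrightarrow> le y x \<Longrightarrow> x = y"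
  unfolding bipotent_semiring_def by blast
lemma bip_total: "bipotent_semiring G f u z le \<Longrightarrow> x \<in> G \<Longrightarrow> y \<in> G \<Longrightarrow> le x y \<or> le y x"
  unfolding bipotent_semiring_def by blast
lemma bip_mono: "bipotent_semiring G f u z le \<Longrightarrow> x \<in> G \<Longrightarrow> y \<in> G \<Longrightarrow> w \<in> G \<Longrightarrow> le x y \<Longrightarrow> le (f x w) (f y w)"
  unfolding bipotent_semiring_def by blast
lemma bip_trans: "bipotent_semiring G f u z le \<Longrightarrow> x \<in> G \<Longrightarrow> y \<in> G \<Longrightarrow> w \<in> G \<Longrightarrow> le x y \<Longrightarrow> le y w \<Longrightarrow> le x w"
  unfolding bipotent_semiring_def by blast

locale stm =
  fixes U :: "'u set" and f :: "'u \<Rightarrow> 'u \<Rightarrow> 'u" and u z e :: 'u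
    and le :: "'u \<Rightarrow> 'u \<Rightarrow> bool"
  assumes stm: "supertropical_monoid U f u z e le"
begin

lemma cl: "x \<in> U \<Longrightarrow> y \<in> U \<Longrightarrow> f x y \<in> U"
  using stm unfolding supertropical_monoid_def comm_monoid_abs_def by blast
lemma assoc: "x \<in> U \<Longrightarrow> y \<in> U \<Longrightarrow> w \<in> U \<Longrightarrow> f (f x y) w = f x (f y w)"
  using stm unfolding supertropical_monoid_def comm_monoid_abs_def by blast
lemma comm: "x \<in> U \<Longrightarrow> y \<in> U \<Longrightarrow> f x y = f y x"
  using stm unfolding supertropical_monoid_def comm_monoid_abs_def by blast
lemma zabs: "x \<in> U \<Longrightarrow> f z x = z"
  using stm unfolding supertropical_monoid_def comm_monoid_abs_def by blast
lemma zU: "z \<in> U"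
  using stm unfolding supertropical_monoid_def comm_monoid_abs_def by blast
lemma eU: "e \<in> U" using stm unfolding supertropical_monoid_def by blast
lemma ee: "f e e = e" using stm unfolding supertropical_monoid_def by blast
lemma ez: "x \<in> U \<Longrightarrow> f e x = z \<Longrightarrow> x = z" using stm unfolding supertropical_monoid_def by blast
lemma bip: "bipotent_semiring (f e ` U) f e z le" using stm unfolding supertropical_monoid_def by blast
lemma antisym: "x \<in> f e ` U \<Longrightarrow> y \<in> f e ` U \<Longrightarrow> le x y \<Longrightarrow> le y x \<Longrightarrow> x = y"
  using bip_antisym[OF bip] by blast
lemma total: "x \<in> f e ` U \<Longrightarrow> y \<in> f e ` U \<Longrightarrow> le x y \<or> le y x"
  using bip_total[OF bip] by blast
lemma mono: "x \<in> f e ` U \<Longrightarrow> y \<in> f e ` U \<Longrightarrow> w \<in> f e ` U \<Longrightarrow> le x y \<Longrightarrow> le (f x w) (f y w)"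
  using bip_mono[OF bip] by blast
lemma trans: "x \<in> f e ` U \<Longrightarrow> y \<in> f e ` U \<Longrightarrow> w \<in> f e ` U \<Longrightarrow> le x y \<Longrightarrow> le y w \<Longrightarrow> le x w"
  using bip_trans[OF bip] by blast

lemma EE: "x \<in> U \<Longrightarrow> f e (f e x) = f e x"
  using assoc[OF eU eU, of x] ee by simp
lemma Eleft: "w \<in> U \<Longrightarrow> x \<in> U \<Longrightarrow> f w (f e x) = f e (f w x)"
  by (metis assoc comm eU)
lemma Emul: "x \<in> U \<Longrightarrow> y \<in> U \<Longrightarrow> f e (f x y) = f (f e x) (f e y)"
proof -
  assume x: "x \<in> U" and y: "y \<in> U"
  have "f (f e x) (f e y) = f e (f x (f e y))" using assoc eU x y cl by simp
  also have "f x (f e y) = f e (f x y)" using Eleft x y by simp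
  finally show ?thesis using EE cl x y by simp
qed
lemma Ez: "f e z = z" using zabs eU comm zU by metis

lemma tri:
  assumes "x \<in> U" "y \<in> U"
  obtains "ord_less le (f e x) (f e y)" | "ord_less le (f e y) (f e x)" | "f e x = f e y"
proof -
  have "f e x \<in> f e ` U" "f e y \<in> f e ` U" using assms by auto
  then have "le (f e x) (f e y) \<or> le (f e y) (f e x)" using total by blast
  then show ?thesis using that unfolding ord_less_def by (cases "f e x = f e y") auto
qed

lemma ltrans: "x \<in> U \<Longrightarrow> y \<in> U \<Longrightarrow> w \<in> U \<Longrightarrow> ord_less le (f e x) (f e y) \<Longrightarrow> ord_less le (f e y) (f e w) \<Longrightarrow> ord_less le (f e x) (f e w)"
proof -
  assume "x \<in> U" "y \<in> U" "w \<in> U"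
  then have m: "f e x \<in> f e ` U" "f e y \<in> f e ` U" "f e w \<in> f e ` U" by auto
  assume "ord_less le (f e x) (f e y)" "ord_less le (f e y) (f e w)"
  then have l1: "le (f e x) (f e y)" "f e x \<noteq> f e y" "le (f e y) (f e w)" "f e y \<noteq> f e w"
    unfolding ord_less_def by auto
  have "le (f e x) (f e w)" using trans[OF m l1(1) l1(3)] .
  moreover have "f e x \<noteq> f e w"
  proof
    assume "f e x = f e w"
    then have "le (f e y) (f e x)" using l1(3) by simp
    then show False using antisym[OF m(1,2) l1(1)] l1(2) by simp
  qed
  ultimately show ?thesis unfolding ord_less_def by simp
qed

lemma lasym: "x \<in> U \<Longrightarrow> y \<in> U \<Longrightarrow> ord_less le (f e x) (f e y) \<Longrightarrow> \<not> ord_less le (f e y) (f e x)"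
proof -
  assume "x \<in> U" "y \<in> U"
  then have m: "f e x \<in> f e ` U" "f e y \<in> f e ` U" by auto
  assume "ord_less le (f e x) (f e y)"
  then show ?thesis unfolding ord_less_def using antisym[OF m] by blast
qed

lemma st1: "ord_less le (f e x) (f e y) \<Longrightarrow> st_add f e le x y = y" unfolding st_add_def by simp
lemma st2: "x \<in> U \<Longrightarrow> y \<in> U \<Longrightarrow> ord_less le (f e y) (f e x) \<Longrightarrow> st_add f e le x y = x"
  unfolding st_add_def using lasym by auto
lemma st3: "f e x = f e y \<Longrightarrow> st_add f e le x y = f e x" unfolding st_add_def ord_less_def by simp

lemma st_assoc:
  assumes x: "x \<in> U" and y: "y \<in> U" and w: "w \<in> U"
  shows "st_add f e le (st_add f e le x y) w = st_add f e le x (st_add f e le y w)"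
proof -
  have exU: "f e x \<in> U" "f e y \<in> U" "f e w \<in> U" using cl eU x y w by auto
  note EEs = EE[OF x] EE[OF y] EE[OF w]
  show ?thesis
  proof (cases rule: tri[OF x y])
    case xy: 1
    show ?thesis
    proof (cases rule: tri[OF y w])
      case yw: 1
      have a: "st_add f e le x y = y" using st1[OF xy] .
      have b: "st_add f e le y w = w" using st1[OF yw] .
      have c: "st_add f e le x w = w" using st1[OF ltrans[OF x y w xy yw]] .
      show ?thesis unfolding a b c ..
    next
      case yw: 2
      have a: "st_add f e le x y = y" using st1[OF xy] .
      have b: "st_add f e le y w = y" using st2[OF y w yw] .
      show ?thesis unfolding a b ..
    next
      case yw: 3
      have a: "st_add f e le x y = y" using st1[OF xy] .
      have b: "st_add f e le y w = f e y" using st3[OF yw] .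
      have xy': "ord_less le (f e x) (f e (f e y))" using xy EEs(2) by simp
      have d: "st_add f e le x (f e y) = f e y" using st1[OF xy'] .
      show ?thesis unfolding a b d ..
    qed
  next
    case xy: 2
    show ?thesis
    proof (cases rule: tri[OF y w])
      case yw: 1
      have a: "st_add f e le x y = x" using st2[OF x y xy] .
      have b: "st_add f e le y w = w" using st1[OF yw] .
      show ?thesis unfolding a b ..
    next
      case yw: 2
      have a: "st_add f e le x y = x" using st2[OF x y xy] .
      have b: "st_add f e le y w = y" using st2[OF y w yw] .
      have c: "st_add f e le x w = x" using st2[OF x w ltrans[OF w y x yw xy]] .
      show ?thesis unfolding a b c ..
    next
      case yw: 3
      have a: "st_add f e le x y = x" using st2[OF x y xy] .
      have b: "st_add f e le y w = f e y" using st3[OF yw] .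
      have wx: "ord_less le (f e w) (f e x)" using xy yw by simp
      have c: "st_add f e le x w = x" using st2[OF x w wx] .
      have xy': "ord_less le (f e (f e y)) (f e x)" using xy EEs(2) by simp
      have d: "st_add f e le x (f e y) = x" using st2[OF x exU(2) xy'] .
      show ?thesis unfolding a b c d ..
    qed
  next
    case xy: 3
    have a: "st_add f e le x y = f e x" using st3[OF xy] .
    show ?thesis
    proof (cases rule: tri[OF y w])
      case yw: 1
      have b: "st_add f e le y w = w" using st1[OF yw] .
      have c1: "ord_less le (f e (f e x)) (f e w)" using yw xy EEs(1) by simp
      have c: "st_add f e le (f e x) w = w" using st1[OF c1] .
      have c2: "ord_less le (f e x) (f e w)" using yw xy by simp
      have d: "st_add f e le x w = w" using st1[OF c2] .
      show ?thesis unfolding a b c d ..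
    next
      case yw: 2
      have b: "st_add f e le y w = y" using st2[OF y w yw] .
      have c1: "ord_less le (f e w) (f e (f e x))" using yw xy EEs(1) by simp
      have c: "st_add f e le (f e x) w = f e x" using st2[OF exU(1) w c1] .
      show ?thesis unfolding a b c ..
    next
      case yw: 3
      have b: "st_add f e le y w = f e y" using st3[OF yw] .
      have c1: "f e (f e x) = f e w" using yw xy EEs(1) by simp
      have c: "st_add f e le (f e x) w = f e x" using st3[OF c1] EEs(1) by simp
      have d1: "f e x = f e (f e y)" using xy EEs(2) by simp
      have d: "st_add f e le x (f e y) = f e x" using st3[OF d1] .
      show ?thesis unfolding a b c d ..
    qed
  qed
qed

end

theorem theorem6p12:
  fixes v :: "'r::comm_semiring_1 \<Rightarrow> 'u"
    and U :: "'u set" and f :: "'u \<Rightarrow> 'u \<Rightarrow> 'u" and u z e :: 'u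
    and le :: "'u \<Rightarrow> 'u \<Rightarrow> bool"
  assumes "supertropical_monoid U f u z e le"
    and "m_valuation v (f e ` U) f e z le"
    and "range v = f e ` U"
  shows "(\<forall>\<phi>. supervaluation \<phi> U f u z e le \<and> covers \<phi> v f e \<longrightarrow>
              (\<forall>a\<in>Yset v z le. \<phi> a \<in> f e ` U))
       \<and> (Yset v z le = {} \<longrightarrow>
           (\<forall>\<phi>. m_supervaluation \<phi> U f u z e le \<and> sv_surjective \<phi> U f e \<and> covers \<phi> v f e
              \<longrightarrow> supervaluation \<phi> U f u z e le))"
proof -
  interpret stm U f u z e le using assms(1) by unfold_locales
  have vval: "\<And>a. v a \<in> f e ` U" using assms(3) by blast
  have vmul: "\<And>a b. v (a * b) = f (v a) (v b)" using assms(2) unfolding m_valuation_def by blast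
  have part1: "\<forall>a\<in>Yset v z le. \<phi> a \<in> f e ` U"
    if sv: "supervaluation \<phi> U f u z e le" and cov: "covers \<phi> v f e" for \<phi> :: "'r \<Rightarrow> 'u"
  proof
    fix t assume "t \<in> Yset v z le"
    then obtain a b a' where t: "t = a * b" and lt: "ord_less le (v a') (v a)"
      and eq: "v (a' * b) = v (a * b)" unfolding Yset_def by blast
    have msv: "m_supervaluation \<phi> U f u z e le" and sts: "supertropical_semiring U f u z e le"
      using sv unfolding supervaluation_def by auto
    have phU: "\<And>a. \<phi> a \<in> U" and phm: "\<And>a b. \<phi> (a * b) = f (\<phi> a) (\<phi> b)"
      using msv unfolding m_supervaluation_def by auto
    have ce: "\<And>a. f e (\<phi> a) = v a" using cov unfolding covers_def by auto
    have dist: "f (\<phi> b) (st_add f e le (\<phi> a) (\<phi> a')) = st_add f e le (f (\<phi> b) (\<phi> a)) (f (\<phi> b) (\<phi> a'))"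
      using sts phU unfolding supertropical_semiring_def by blast
    have nlt: "\<not> ord_less le (v a) (v a')"
      using lt antisym[OF vval vval] unfolding ord_less_def by blast
    have s1: "st_add f e le (\<phi> a) (\<phi> a') = \<phi> a"
      using nlt lt unfolding st_add_def ce by simp
    have e1: "f e (f (\<phi> b) (\<phi> a)) = v (a * b)" using ce[of "a*b"] phm[of b a] by (simp add: mult.commute)
    have e2: "f e (f (\<phi> b) (\<phi> a')) = v (a * b)" using ce[of "a'*b"] phm[of b a'] eq by (simp add: mult.commute)
    have "st_add f e le (f (\<phi> b) (\<phi> a)) (f (\<phi> b) (\<phi> a')) = f e (f (\<phi> b) (\<phi> a))"
      unfolding st_add_def e1 e2 ord_less_def by simp
    have "\<phi> t = f (\<phi> a) (\<phi> b)" using t phm by simp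
    also have "\<dots> = f (\<phi> b) (\<phi> a)" using comm phU by simp
    also have "\<dots> = f e (f (\<phi> b) (\<phi> a))" using dist s1 \<open>st_add f e le (f (\<phi> b) (\<phi> a)) (f (\<phi> b) (\<phi> a')) = f e (f (\<phi> b) (\<phi> a))\<close> by simp
    finally have "\<phi> t = f e (f (\<phi> b) (\<phi> a))" .
    then show "\<phi> t \<in> f e ` U" using cl phU by blast
  qed
  have part2: "supervaluation \<phi> U f u z e le"
    if Y0: "Yset v z le = {}" and msv: "m_supervaluation \<phi> U f u z e le"
      and sj: "sv_surjective \<phi> U f e" and cov: "covers \<phi> v f e" for \<phi> :: "'r \<Rightarrow> 'u"
  proof -
    have phU: "\<And>a. \<phi> a \<in> U" and phm: "\<And>a b. \<phi> (a * b) = f (\<phi> a) (\<phi> b)"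
      using msv unfolding m_supervaluation_def by auto
    have ce: "\<And>a. f e (\<phi> a) = v a" using cov unfolding covers_def by auto
    have Ueq: "U = range \<phi> \<union> (\<lambda>a. f e (\<phi> a)) ` UNIV" using sj unfolding sv_surjective_def .
    have Ev: "\<exists>a. f e x = v a" if "x \<in> U" for x
    proof -
      from that Ueq obtain a where "x = \<phi> a \<or> x = f e (\<phi> a)" by blast
      then have "f e x = v a" using ce EE[OF phU[of a]] by auto
      then show ?thesis by blast
    qed
    have ghost: "f w y = f e (f w y)"
      if x: "x \<in> U" and y: "y \<in> U" and w: "w \<in> U" and lt: "ord_less le (f e x) (f e y)"
        and eqe: "f e (f w x) = f e (f w y)" for x y w
    proof (cases "f e (f w y) = z")
      case True
      then have "f w y = z" using ez cl w y by blast
      then show ?thesis using Ez by simp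
    next
      case nz: False
      show ?thesis
      proof (cases "w \<in> range \<phi> \<and> y \<in> range \<phi>")
        case False
        then have "(\<exists>c. w = f e (\<phi> c)) \<or> (\<exists>c. y = f e (\<phi> c))" using Ueq w y by auto
        then show ?thesis
        proof
          assume "\<exists>c. w = f e (\<phi> c)"
          then obtain c where "w = f e (\<phi> c)" by blast
          then have "f w y = f e (f (\<phi> c) y)" using assoc eU phU y by simp
          then show ?thesis using EE cl phU y by simp
        next
          assume "\<exists>c. y = f e (\<phi> c)"
          then obtain c where "y = f e (\<phi> c)" by blast
          then have "f w y = f e (f w (\<phi> c))" using Eleft w phU by simp
          then show ?thesis using EE cl phU w by simp
        qed
      next
        case True
        then obtain c b where wc: "w = \<phi> c" and yb: "y = \<phi> b" by blast
        obtain a' where xa: "f e x = v a'" using Ev x by blast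
        have "v (a' * c) = v (b * c)"
        proof -
          have "f e (f w x) = f (f e w) (f e x)" using Emul w x by simp
          also have "\<dots> = v (c * a')" using xa wc ce vmul by simp
          also have "\<dots> = v (a' * c)" by (simp add: mult.commute)
          finally have 1: "f e (f w x) = v (a' * c)" .
          have "f e (f w y) = v (b * c)" using wc yb ce[of "b*c"] phm[of c b] by (simp add: mult.commute)
          with 1 eqe show ?thesis by simp
        qed
        moreover have "ord_less le (v a') (v b)" using lt xa yb ce by simp
        moreover have "v (b * c) \<noteq> z" using nz wc yb ce[of "b*c"] phm[of c b] by (simp add: mult.commute)
        ultimately have "b * c \<in> Yset v z le" unfolding Yset_def by blast
        with Y0 show ?thesis by blast
      qed
    qed
    have monoE: "le (f e (f w x)) (f e (f w y))"
      if x: "x \<in> U" and y: "y \<in> U" and w: "w \<in> U" and l: "le (f e x) (f e y)" for x y w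
    proof -
      have "le (f (f e x) (f e w)) (f (f e y) (f e w))" using mono l x y w by blast
      moreover have "f (f e x) (f e w) = f e (f w x)" using Emul[OF w x] comm eU cl x w by simp
      moreover have "f (f e y) (f e w) = f e (f w y)" using Emul[OF w y] comm eU cl y w by simp
      ultimately show ?thesis by simp
    qed
    have dist: "f w (st_add f e le x y) = st_add f e le (f w x) (f w y)"
      if x: "x \<in> U" and y: "y \<in> U" and w: "w \<in> U" for x y w
    proof -
      have gx: "f e x \<in> f e ` U" and gy: "f e y \<in> f e ` U" using x y by auto
      have gwx: "f e (f w x) \<in> f e ` U" and gwy: "f e (f w y) \<in> f e ` U" using x y w cl by auto
      show ?thesis
      proof (cases "ord_less le (f e x) (f e y)")
        case A: True
        have l: "le (f e (f w x)) (f e (f w y))" using monoE x y w A unfolding ord_less_def by blast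
        show ?thesis
        proof (cases "f e (f w x) = f e (f w y)")
          case True
          then show ?thesis using A ghost[OF x y w A True] unfolding st_add_def ord_less_def by simp
        next
          case False
          then show ?thesis using A l unfolding st_add_def ord_less_def by simp
        qed
      next
        case nA: False
        show ?thesis
        proof (cases "ord_less le (f e y) (f e x)")
          case B: True
          have l: "le (f e (f w y)) (f e (f w x))" using monoE x y w B unfolding ord_less_def by blast
          show ?thesis
          proof (cases "f e (f w x) = f e (f w y)")
            case True
            have g: "f w x = f e (f w x)" using ghost[OF y x w B] True by simp
            have l1: "st_add f e le x y = x" using st2[OF x y B] .
            have l2: "st_add f e le (f w x) (f w y) = f e (f w x)" using st3[OF True] .
            show ?thesis unfolding l1 l2 using g .
          next
            case False
            then show ?thesis using nA B l antisym[OF gwx gwy] unfolding st_add_def ord_less_def by auto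
          qed
        next
          case nB: False
          have exy: "f e x = f e y" using nA nB total[OF gx gy] unfolding ord_less_def by auto
          have "f e (f w x) = f e (f w y)" using exy Emul[OF w x] Emul[OF w y] by simp
          then have l2: "st_add f e le (f w x) (f w y) = f e (f w x)" using st3 by blast
          have l1: "st_add f e le x y = f e x" using st3[OF exy] .
          show ?thesis unfolding l1 l2 using Eleft[OF w x] .
        qed
      qed
    qed
    have "supertropical_semiring U f u z e le"
      unfolding supertropical_semiring_def using assms(1) st_assoc dist by blast
    then show ?thesis using msv unfolding supervaluation_def by blast
  qed
  show ?thesis using part1 part2 by blast
qed

end
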